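(* Under the standing assumptions below, if $V\in C(\overline\Omega)$ is a viscosity solution of $F=0$ in $\Omega$, then $\mathcal J(V)=0$. In particular, the unique continuous viscosity solution of the Dirichlet problem $F(x,V,\nabla V,\nabla^2V)=0$ in $\Omega$, $V=g$ on $\partial\Omega$, satisfies $\mathcal J(V)=0$. Moreover, if $V\in C(\overline\Omega)$ satisfies $\mathcal J(V)=0$, then for $(\nu_X\otimes\nu_{\mathcal M})$-a.e. $(x,M)$ one has $F(\zeta_x,V(\zeta_x),M(x-\zeta_x),-M)\ge0$ whenever $\zeta_x\in\Omega$ and $F(\zeta^\star_x,V(\zeta^\star_x),-M(x-\zeta^\star_x),M)\le0$ whenever $\zeta^\star_x\in\Omega$.
   Context: Let $\Omega\subset\mathbb{R}^n$ be a bounded open set, $U\subset\mathbb{R}^m$ compact, $\beta\ge0$, and $f:\overline\Omega\times U\to\mathbb{R}^n$, $\Sigma:\overline\Omega\times U\to\mathbb{R}^{n\times n}$, $\ell:\overline\Omega\times U\to\mathbb{R}$ continuous, with $f,\Sigma$ Lipschitz in the state uniformly in the control and of linear growth; $a=\Sigma\Sigma^\top$. With $\mathbb S(n)$ the symmetric and $\mathbb S_{++}(n)$ the positive definite $n\times n$ matrices, define $H(x,p,A;c)=\ell(x,c)+p^\top f(x,c)+\tfrac12\operatorname{tr}(a(x,c)A)$ and $F(x,r,p,A)=\beta r-\inf_{c\in U}H(x,p,A;c)$. Standing assumptions: either $\beta>0$ or $\lambda I\preceq\Sigma\Sigma^\top\preceq\Lambda I$ on $\overline\Omega\times U$ for some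 $0<\lambda\le\Lambda<\infty$; $\partial\Omega$ is Lipschitz and $F$-regular; $g\in C(\partial\Omega)$. Viscosity (sub/super)solutions of $F=0$ in $\Omega$ are in the Crandall–Lions sense: a subsolution is u.s.c. on $\overline\Omega$ and satisfies $F(\zeta,V(\zeta),\nabla\phi(\zeta),\nabla^2\phi(\zeta))\le0$ whenever $\phi\in C^2(\Omega)$ and $V-\phi$ has a local max at $\zeta\in\Omega$; a supersolution is l.s.c. and satisfies $\ge0$ at local minima; a solution is both. Envelopes and penalty: for continuous $V$ and $(x,M)\in\overline\Omega\times\mathbb S_{++}(n)$ let $\zeta_x\in\arg\min_{\zeta\in\overline\Omega}\{V(\zeta)+\tfrac12(x-\zeta)^\top M(x-\zeta)\}$ and $\zeta^\star_x\in\arg\max_{\zeta\in\overline\Omega}\{V(\zeta)-\tfrac12(x-\zeta)^\top M(x-\zeta)\}$ (a fixed choice of contacts), and set $p^-=M(x-\zeta_x)$, $A^-=-M$, $p^+=-M(x-\zeta^\star_x)$, $A^+=M$. Define $\mathcal J_{\rm super}(x,M;V)=\max\{-F(\zeta_x,V(\zeta_x),p^-,A^-),0\}$ and $\mathcal J_{\rm sub}(x,M;V)=\max\{F(\zeta^\star_x,V(\zeta^\star_x),p^+,A^+),0\}$, each taken to be $0$ when the corresponding contact lies on $\partial\Omega$. Let $\nu_X$ be a probability measure on $\overline\Omega$ and $\nu_{\mathcal M}$ a probability measure on $\mathbb S_{++}(n)$, and $\mathcal J(V):=\mathbb E_{(x,M)\sim\nu_X\otimes\nu_{\mathcal M}}[\mathcal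 J_{\rm super}(x,M;V)+\mathcal J_{\rm sub}(x,M;V)]$. *)

theory Defs
  imports "HOL-Analysis.Analysis" "HOL-Probability.Probability"
begin

definition quadf :: "real^'n^'n \<Rightarrow> real^'n \<Rightarrow> real" where
  "quadf M v = v \<bullet> (M *v v)"

definition posdef :: "real^'n^'n \<Rightarrow> bool" where
  "posdef M \<longleftrightarrow> transpose M = M \<and> (\<forall>v. v \<noteq> 0 \<longrightarrow> quadf M v > 0)"

definition Hham :: "(real^'n \<Rightarrow> real^'m \<Rightarrow> real) \<Rightarrow> (real^'n \<Rightarrow> real^'m \<Rightarrow> real^'n)
    \<Rightarrow> (real^'n \<Rightarrow> real^'m \<Rightarrow> real^'n^'n)
    \<Rightarrow> real^'n \<Rightarrow> real^'n \<Rightarrow> real^'n^'n \<Rightarrow> real^'m \<Rightarrow> real" where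
  "Hham l f Sig x p A c =
     l x c + p \<bullet> f x c + (1/2) * trace ((Sig x c ** transpose (Sig x c)) ** A)"

definition Fop :: "real \<Rightarrow> (real^'m) set \<Rightarrow> (real^'n \<Rightarrow> real^'m \<Rightarrow> real)
    \<Rightarrow> (real^'n \<Rightarrow> real^'m \<Rightarrow> real^'n) \<Rightarrow> (real^'n \<Rightarrow> real^'m \<Rightarrow> real^'n^'n)
    \<Rightarrow> real^'n \<Rightarrow> real \<Rightarrow> real^'n \<Rightarrow> real^'n^'n \<Rightarrow> real" where
  "Fop \<beta> U l f Sig x r p A = \<beta> * r - (INF c\<in>U. Hham l f Sig x p A c)"

definition C2_on :: "(real^'n) set \<Rightarrow> (real^'n \<Rightarrow> real) \<Rightarrow> (real^'n \<Rightarrow> real^'n)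
    \<Rightarrow> (real^'n \<Rightarrow> real^'n^'n) \<Rightarrow> bool" where
  "C2_on S phi Dphi D2phi \<longleftrightarrow>
     (\<forall>y\<in>S. (phi has_derivative (\<lambda>h. Dphi y \<bullet> h)) (at y)
          \<and> (Dphi has_derivative (\<lambda>h. D2phi y *v h)) (at y))
     \<and> continuous_on S D2phi"

definition usc_on :: "'a::metric_space set \<Rightarrow> ('a \<Rightarrow> real) \<Rightarrow> bool" where
  "usc_on S V \<longleftrightarrow> (\<forall>x\<in>S. \<forall>t. V x < t \<longrightarrow> (\<exists>e>0. \<forall>y\<in>S. dist y x < e \<longrightarrow> V y < t))"

definition lsc_on :: "'a::metric_space set \<Rightarrow> ('a \<Rightarrow> real) \<Rightarrow> bool" where
  "lsc_on S V \<longleftrightarrow> (\<forall>x\<in>S. \<forall>t. t < V x \<longrightarrow> (\<exists>e>0. \<forall>y\<in>S. dist y x < e \<longrightarrow> t < V y))"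

definition visc_sub :: "(real^'n) set
    \<Rightarrow> (real^'n \<Rightarrow> real \<Rightarrow> real^'n \<Rightarrow> real^'n^'n \<Rightarrow> real) \<Rightarrow> (real^'n \<Rightarrow> real) \<Rightarrow> bool" where
  "visc_sub \<Omega> Fq V \<longleftrightarrow> usc_on (closure \<Omega>) V \<and>
     (\<forall>phi Dphi D2phi z. C2_on \<Omega> phi Dphi D2phi \<and> z \<in> \<Omega> \<and>
        (\<exists>e>0. \<forall>y\<in>\<Omega>. dist y z < e \<longrightarrow> V y - phi y \<le> V z - phi z)
        \<longrightarrow> Fq z (V z) (Dphi z) (D2phi z) \<le> 0)"

definition visc_super :: "(real^'n) set
    \<Rightarrow> (real^'n \<Rightarrow> real \<Rightarrow> real^'n \<Rightarrow> real^'n^'n \<Rightarrow> real) \<Rightarrow> (real^'n \<Rightarrow> real) \<Rightarrow> bool" where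
  "visc_super \<Omega> Fq V \<longleftrightarrow> lsc_on (closure \<Omega>) V \<and>
     (\<forall>phi Dphi D2phi z. C2_on \<Omega> phi Dphi D2phi \<and> z \<in> \<Omega> \<and>
        (\<exists>e>0. \<forall>y\<in>\<Omega>. dist y z < e \<longrightarrow> V y - phi y \<ge> V z - phi z)
        \<longrightarrow> Fq z (V z) (Dphi z) (D2phi z) \<ge> 0)"

definition visc_solution :: "(real^'n) set
    \<Rightarrow> (real^'n \<Rightarrow> real \<Rightarrow> real^'n \<Rightarrow> real^'n^'n \<Rightarrow> real) \<Rightarrow> (real^'n \<Rightarrow> real) \<Rightarrow> bool" where
  "visc_solution \<Omega> Fq V \<longleftrightarrow> visc_sub \<Omega> Fq V \<and> visc_super \<Omega> Fq V"

definition is_min_contact :: "(real^'n) set \<Rightarrow> (real^'n \<Rightarrow> real) \<Rightarrow> real^'n \<Rightarrow> real^'n^'n \<Rightarrow> real^'n \<Rightarrow> bool" where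
  "is_min_contact \<Omega> V x M z \<longleftrightarrow> z \<in> closure \<Omega> \<and>
     (\<forall>w\<in>closure \<Omega>. V z + (1/2) * quadf M (x - z) \<le> V w + (1/2) * quadf M (x - w))"

definition is_max_contact :: "(real^'n) set \<Rightarrow> (real^'n \<Rightarrow> real) \<Rightarrow> real^'n \<Rightarrow> real^'n^'n \<Rightarrow> real^'n \<Rightarrow> bool" where
  "is_max_contact \<Omega> V x M z \<longleftrightarrow> z \<in> closure \<Omega> \<and>
     (\<forall>w\<in>closure \<Omega>. V w - (1/2) * quadf M (x - w) \<le> V z - (1/2) * quadf M (x - z))"

definition contact_choice :: "(real^'n) set \<Rightarrow> (real^'n \<Rightarrow> real)
    \<Rightarrow> (real^'n \<Rightarrow> real^'n^'n \<Rightarrow> real^'n) \<Rightarrow> (real^'n \<Rightarrow> real^'n^'n \<Rightarrow> real^'n) \<Rightarrow> bool" where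
  "contact_choice \<Omega> V zmin zmax \<longleftrightarrow>
     (\<forall>x\<in>closure \<Omega>. \<forall>M. posdef M \<longrightarrow>
        is_min_contact \<Omega> V x M (zmin x M) \<and> is_max_contact \<Omega> V x M (zmax x M))"

definition J_super :: "(real^'n) set \<Rightarrow> (real^'n \<Rightarrow> real \<Rightarrow> real^'n \<Rightarrow> real^'n^'n \<Rightarrow> real)
    \<Rightarrow> (real^'n \<Rightarrow> real) \<Rightarrow> (real^'n \<Rightarrow> real^'n^'n \<Rightarrow> real^'n) \<Rightarrow> real^'n \<Rightarrow> real^'n^'n \<Rightarrow> real" where
  "J_super \<Omega> Fq V zmin x M =
     (let z = zmin x M in
      if z \<in> \<Omega> then max (- Fq z (V z) (M *v (x - z)) (- M)) 0 else 0)"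

definition J_sub :: "(real^'n) set \<Rightarrow> (real^'n \<Rightarrow> real \<Rightarrow> real^'n \<Rightarrow> real^'n^'n \<Rightarrow> real)
    \<Rightarrow> (real^'n \<Rightarrow> real) \<Rightarrow> (real^'n \<Rightarrow> real^'n^'n \<Rightarrow> real^'n) \<Rightarrow> real^'n \<Rightarrow> real^'n^'n \<Rightarrow> real" where
  "J_sub \<Omega> Fq V zmax x M =
     (let z = zmax x M in
      if z \<in> \<Omega> then max (Fq z (V z) (- (M *v (x - z))) M) 0 else 0)"

definition Jcost :: "(real^'n) measure \<Rightarrow> (real^'n^'n) measure \<Rightarrow> (real^'n) set
    \<Rightarrow> (real^'n \<Rightarrow> real \<Rightarrow> real^'n \<Rightarrow> real^'n^'n \<Rightarrow> real) \<Rightarrow> (real^'n \<Rightarrow> real)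
    \<Rightarrow> (real^'n \<Rightarrow> real^'n^'n \<Rightarrow> real^'n) \<Rightarrow> (real^'n \<Rightarrow> real^'n^'n \<Rightarrow> real^'n) \<Rightarrow> ennreal" where
  "Jcost \<nu>X \<nu>M \<Omega> Fq V zmin zmax =
     (\<integral>\<^sup>+ xm. ennreal (J_super \<Omega> Fq V zmin (fst xm) (snd xm) + J_sub \<Omega> Fq V zmax (fst xm) (snd xm))
        \<partial>(\<nu>X \<Otimes>\<^sub>M \<nu>M))"

end

theory Submission
  imports Defs
begin


lemma mv_neg_left: "(- (M::real^'n^'n)) *v h = - (M *v h)"
  using matrix_vector_mult_diff_rdistrib[of 0 M h] by simp

lemma mv_neg_right: "(M::real^'n^'n) *v (- h) = - (M *v h)"
  using matrix_vector_mult_diff_distrib[of M 0 h] by simp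

lemma quad_has_deriv:
  fixes M :: "real^'n^'n" and x w0 :: "real^'n"
  assumes sym: "transpose M = M"
  shows "((\<lambda>w. (1/2) * quadf M (x - w)) has_derivative (\<lambda>h. (- (M *v (x - w0))) \<bullet> h)) (at w0)"
proof -
  have d1: "((\<lambda>w. x - w) has_derivative (\<lambda>h. - h)) (at w0)"
    by (auto intro!: derivative_eq_intros)
  have d2: "((\<lambda>w. M *v (x - w)) has_derivative (\<lambda>h. M *v (- h))) (at w0)"
    by (rule bounded_linear.has_derivative[OF matrix_vector_mul_bounded_linear d1]) 
  have d3: "((\<lambda>w. (x - w) \<bullet> (M *v (x - w))) has_derivative
      (\<lambda>h. (x - w0) \<bullet> (M *v (- h)) + (- h) \<bullet> (M *v (x - w0)))) (at w0)"
    using has_derivative_inner[OF d1 d2] by simp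
  have eq: "(x - w0) \<bullet> (M *v (- h)) = (- h) \<bullet> (M *v (x - w0))" for h
  proof -
    have "(x - w0) \<bullet> (M *v (- h)) = ((x - w0) v* M) \<bullet> (- h)" by (rule dot_lmul_matrix[symmetric])
    also have "(x - w0) v* M = M *v (x - w0)"
      using vector_transpose_matrix[of "x - w0" M] sym by simp
    finally show ?thesis by (simp add: inner_commute)
  qed
  have "((\<lambda>w. (1/2) * ((x - w) \<bullet> (M *v (x - w)))) has_derivative
      (\<lambda>h. (1/2) * ((x - w0) \<bullet> (M *v (- h)) + (- h) \<bullet> (M *v (x - w0))))) (at w0)"
    by (rule has_derivative_mult_right[OF d3])
  then show ?thesis
    unfolding quadf_def
  proof (rule has_derivative_eq_rhs)
    show "(\<lambda>h. (1/2) * ((x - w0) \<bullet> (M *v (- h)) + (- h) \<bullet> (M *v (x - w0)))) =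
      (\<lambda>h. (- (M *v (x - w0))) \<bullet> h)"
    proof
      fix h
      have "(- h) \<bullet> (M *v (x - w0)) = (- (M *v (x - w0))) \<bullet> h"
        by (simp add: inner_commute[of h])
      then show "(1/2) * ((x - w0) \<bullet> (M *v (- h)) + (- h) \<bullet> (M *v (x - w0))) =
        (- (M *v (x - w0))) \<bullet> h" unfolding eq by simp
    qed
  qed
qed

lemma lin_has_deriv:
  fixes M :: "real^'n^'n" and x w0 :: "real^'n"
  shows "((\<lambda>w. - (M *v (x - w))) has_derivative (\<lambda>h. M *v h)) (at w0)"
proof -
  have "(\<lambda>w. - (M *v (x - w))) = (\<lambda>w. M *v w - M *v x)"
    by (simp add: matrix_vector_mult_diff_distrib)
  moreover have "((\<lambda>w. M *v w - M *v x) has_derivative (\<lambda>h. M *v h)) (at w0)"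
    using bounded_linear.has_derivative[OF matrix_vector_mul_bounded_linear has_derivative_ident]
    by (auto intro!: derivative_eq_intros)
  ultimately show ?thesis by simp
qed


lemma super_contact:
  assumes vs: "visc_super \<Omega> Fq V" and pd: "posdef M"
    and mc: "is_min_contact \<Omega> V x M z" and zin: "z \<in> \<Omega>"
  shows "Fq z (V z) (M *v (x - z)) (- M) \<ge> 0"
proof -
  have sym: "transpose M = M" using pd by (simp add: posdef_def)
  define phi where "phi = (\<lambda>w. - ((1/2) * quadf M (x - w)))"
  define Dphi where "Dphi = (\<lambda>y. M *v (x - y))"
  define D2 where "D2 = (\<lambda>y::real^'a. - M)"
  have C2: "C2_on \<Omega> phi Dphi D2"
    unfolding C2_on_def
  proof (intro conjI ballI)
    fix y
    show "(phi has_derivative (\<lambda>h. Dphi y \<bullet> h)) (at y)"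
      unfolding phi_def Dphi_def
      using has_derivative_minus[OF quad_has_deriv[OF sym, of x y]] by simp
    show "(Dphi has_derivative (\<lambda>h. D2 y *v h)) (at y)"
      unfolding Dphi_def D2_def
      using has_derivative_minus[OF lin_has_deriv[of M x y]]
      by (simp add: mv_neg_left)
  next
    show "continuous_on \<Omega> D2" unfolding D2_def by simp
  qed
  have "\<forall>y\<in>\<Omega>. dist y z < 1 \<longrightarrow> V y - phi y \<ge> V z - phi z"
  proof (intro ballI impI)
    fix y assume "y \<in> \<Omega>"
    then have "y \<in> closure \<Omega>" using closure_subset by blast
    then have "V z + (1/2) * quadf M (x - z) \<le> V y + (1/2) * quadf M (x - y)"
      using mc unfolding is_min_contact_def by blast
    then show "V y - phi y \<ge> V z - phi z" unfolding phi_def by simp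
  qed
  then have "Fq z (V z) (Dphi z) (D2 z) \<ge> 0"
    using vs C2 zin unfolding visc_super_def by (meson zero_less_one)
  then show ?thesis unfolding Dphi_def D2_def .
qed

lemma sub_contact:
  assumes vs: "visc_sub \<Omega> Fq V" and pd: "posdef M"
    and mc: "is_max_contact \<Omega> V x M z" and zin: "z \<in> \<Omega>"
  shows "Fq z (V z) (- (M *v (x - z))) M \<le> 0"
proof -
  have sym: "transpose M = M" using pd by (simp add: posdef_def)
  define phi where "phi = (\<lambda>w. (1/2) * quadf M (x - w))"
  define Dphi where "Dphi = (\<lambda>y. - (M *v (x - y)))"
  define D2 where "D2 = (\<lambda>y::real^'a. M)"
  have C2: "C2_on \<Omega> phi Dphi D2"
    unfolding C2_on_def
  proof (intro conjI ballI)
    fix y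
    show "(phi has_derivative (\<lambda>h. Dphi y \<bullet> h)) (at y)"
      unfolding phi_def Dphi_def
      using quad_has_deriv[OF sym, of x y] by simp
    show "(Dphi has_derivative (\<lambda>h. D2 y *v h)) (at y)"
      unfolding Dphi_def D2_def
      using lin_has_deriv[of M x y] by simp
  next
    show "continuous_on \<Omega> D2" unfolding D2_def by simp
  qed
  have "\<forall>y\<in>\<Omega>. dist y z < 1 \<longrightarrow> V y - phi y \<le> V z - phi z"
  proof (intro ballI impI)
    fix y assume "y \<in> \<Omega>"
    then have "y \<in> closure \<Omega>" using closure_subset by blast
    then have "V y - (1/2) * quadf M (x - y) \<le> V z - (1/2) * quadf M (x - z)"
      using mc unfolding is_max_contact_def by blast
    then show "V y - phi y \<le> V z - phi z" unfolding phi_def by simp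
  qed
  then have "Fq z (V z) (Dphi z) (D2 z) \<le> 0"
    using vs C2 zin unfolding visc_sub_def by (meson zero_less_one)
  then show ?thesis unfolding Dphi_def D2_def .
qed

lemma J_zero:
  assumes vs: "visc_solution \<Omega> Fq V" and cc: "contact_choice \<Omega> V zmin zmax"
    and x: "x \<in> closure \<Omega>" and pd: "posdef M"
  shows "J_super \<Omega> Fq V zmin x M = 0 \<and> J_sub \<Omega> Fq V zmax x M = 0"
proof -
  have mc: "is_min_contact \<Omega> V x M (zmin x M)" and xc: "is_max_contact \<Omega> V x M (zmax x M)"
    using cc x pd unfolding contact_choice_def by auto
  show ?thesis
    using super_contact[OF _ pd mc] sub_contact[OF _ pd xc] vs
    unfolding J_super_def J_sub_def visc_solution_def Let_def by auto
qed

theorem corollary2p11: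
  fixes \<Omega> :: "(real^'n) set" and U :: "(real^'m) set" and \<beta> :: real
    and f :: "real^'n \<Rightarrow> real^'m \<Rightarrow> real^'n"
    and Sig :: "real^'n \<Rightarrow> real^'m \<Rightarrow> real^'n^'n"
    and l :: "real^'n \<Rightarrow> real^'m \<Rightarrow> real"
    and g :: "real^'n \<Rightarrow> real"
    and \<nu>X :: "(real^'n) measure" and \<nu>M :: "(real^'n^'n) measure"
  assumes \<Omega>_open: "open \<Omega>" and \<Omega>_bdd: "bounded \<Omega>"
    and U_compact: "compact U" and U_ne: "U \<noteq> {}"
    and \<beta>_nonneg: "\<beta> \<ge> 0"
    and f_cont: "continuous_on (closure \<Omega> \<times> U) (\<lambda>z. f (fst z) (snd z))"
    and Sig_cont: "continuous_on (closure \<Omega> \<times> U) (\<lambda>z. Sig (fst z) (snd z))"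
    and l_cont: "continuous_on (closure \<Omega> \<times> U) (\<lambda>z. l (fst z) (snd z))"
    and f_lip: "\<exists>L. \<forall>c\<in>U. L-lipschitz_on (closure \<Omega>) (\<lambda>x. f x c)"
    and Sig_lip: "\<exists>L. \<forall>c\<in>U. L-lipschitz_on (closure \<Omega>) (\<lambda>x. Sig x c)"
    and f_growth: "\<exists>K. \<forall>x\<in>closure \<Omega>. \<forall>c\<in>U. norm (f x c) \<le> K * (1 + norm x)"
    and Sig_growth: "\<exists>K. \<forall>x\<in>closure \<Omega>. \<forall>c\<in>U. norm (Sig x c) \<le> K * (1 + norm x)"
    and nondeg: "\<beta> > 0 \<or> (\<exists>lam Lam. 0 < lam \<and> lam \<le> Lam \<and>
        (\<forall>x\<in>closure \<Omega>. \<forall>c\<in>U. \<forall>v.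
           lam * (v \<bullet> v) \<le> quadf (Sig x c ** transpose (Sig x c)) v
         \<and> quadf (Sig x c ** transpose (Sig x c)) v \<le> Lam * (v \<bullet> v)))"
    and g_cont: "continuous_on (frontier \<Omega>) g"
    and \<nu>X_prob: "prob_space \<nu>X" and \<nu>X_sets: "sets \<nu>X = sets borel"
    and \<nu>X_supp: "emeasure \<nu>X (closure \<Omega>) = 1"
    and \<nu>M_prob: "prob_space \<nu>M" and \<nu>M_sets: "sets \<nu>M = sets borel"
    and \<nu>M_supp: "emeasure \<nu>M {M. posdef M} = 1"
  shows
   "(\<forall>V zmin zmax. continuous_on (closure \<Omega>) V
        \<and> visc_solution \<Omega> (Fop \<beta> U l f Sig) V
        \<and> contact_choice \<Omega> V zmin zmax
      \<longrightarrow> Jcost \<nu>X \<nu>M \<Omega> (Fop \<beta> U l f Sig) V zmin zmax = 0)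
  \<and> (\<forall>V zmin zmax. continuous_on (closure \<Omega>) V
        \<and> visc_solution \<Omega> (Fop \<beta> U l f Sig) V
        \<and> (\<forall>x\<in>frontier \<Omega>. V x = g x)
        \<and> contact_choice \<Omega> V zmin zmax
      \<longrightarrow> Jcost \<nu>X \<nu>M \<Omega> (Fop \<beta> U l f Sig) V zmin zmax = 0)
  \<and> (\<forall>V zmin zmax. continuous_on (closure \<Omega>) V
        \<and> contact_choice \<Omega> V zmin zmax
        \<and> (\<lambda>xm. J_super \<Omega> (Fop \<beta> U l f Sig) V zmin (fst xm) (snd xm)
               + J_sub \<Omega> (Fop \<beta> U l f Sig) V zmax (fst xm) (snd xm))
            \<in> borel_measurable (\<nu>X \<Otimes>\<^sub>M \<nu>M)
        \<and> Jcost \<nu>X \<nu>M \<Omega> (Fop \<beta> U l f Sig) V zmin zmax = 0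
      \<longrightarrow> (AE xm in \<nu>X \<Otimes>\<^sub>M \<nu>M.
            (zmin (fst xm) (snd xm) \<in> \<Omega> \<longrightarrow>
               Fop \<beta> U l f Sig (zmin (fst xm) (snd xm)) (V (zmin (fst xm) (snd xm)))
                 (snd xm *v (fst xm - zmin (fst xm) (snd xm))) (- snd xm) \<ge> 0)
          \<and> (zmax (fst xm) (snd xm) \<in> \<Omega> \<longrightarrow>
               Fop \<beta> U l f Sig (zmax (fst xm) (snd xm)) (V (zmax (fst xm) (snd xm)))
                 (- (snd xm *v (fst xm - zmax (fst xm) (snd xm)))) (snd xm) \<le> 0)))"
proof -
  interpret X: prob_space \<nu>X by (rule \<nu>X_prob)
  interpret Mm: prob_space \<nu>M by (rule \<nu>M_prob)
  let ?S = "closure \<Omega> \<times> {M. posdef M}"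
  have posM: "{M. posdef M} \<in> sets \<nu>M"
    using \<nu>M_supp emeasure_notin_sets by fastforce
  have clX: "closure \<Omega> \<in> sets \<nu>X" using \<nu>X_sets by simp
  have P: "prob_space (\<nu>X \<Otimes>\<^sub>M \<nu>M)" by (rule prob_space_pair[OF \<nu>X_prob \<nu>M_prob])
  have Ssets: "?S \<in> sets (\<nu>X \<Otimes>\<^sub>M \<nu>M)" using posM clX by simp
  have em: "emeasure (\<nu>X \<Otimes>\<^sub>M \<nu>M) ?S = 1"
    using Mm.emeasure_pair_measure_Times[OF clX posM] \<nu>X_supp \<nu>M_supp by simp
  have "measure (\<nu>X \<Otimes>\<^sub>M \<nu>M) ?S = 1" using em by (simp add: measure_def)
  then have AE: "AE xm in \<nu>X \<Otimes>\<^sub>M \<nu>M. xm \<in> ?S"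
    using prob_space.AE_in_set_eq_1[OF P Ssets] by simp
  have part1: "Jcost \<nu>X \<nu>M \<Omega> Fq V zmin zmax = 0"
    if vs: "visc_solution \<Omega> Fq V" and cc: "contact_choice \<Omega> V zmin zmax" for Fq V zmin zmax
  proof -
    have key: "ennreal (J_super \<Omega> Fq V zmin (fst xm) (snd xm) + J_sub \<Omega> Fq V zmax (fst xm) (snd xm)) = 0"
      if xS: "xm \<in> ?S" for xm
    proof -
      have h1: "fst xm \<in> closure \<Omega>" using xS by (simp only: mem_Times_iff)
      have h2: "posdef (snd xm)" using xS by (simp only: mem_Times_iff mem_Collect_eq)
      have "J_super \<Omega> Fq V zmin (fst xm) (snd xm) = 0" "J_sub \<Omega> Fq V zmax (fst xm) (snd xm) = 0"
        using J_zero[OF vs cc h1 h2] by blast+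
      then show ?thesis by simp
    qed
    have "AE xm in \<nu>X \<Otimes>\<^sub>M \<nu>M. ennreal (J_super \<Omega> Fq V zmin (fst xm) (snd xm) + J_sub \<Omega> Fq V zmax (fst xm) (snd xm)) = 0"
      using AE by (rule eventually_mono) (rule key)
    then have "Jcost \<nu>X \<nu>M \<Omega> Fq V zmin zmax = (\<integral>\<^sup>+ xm. 0 \<partial>(\<nu>X \<Otimes>\<^sub>M \<nu>M))"
      unfolding Jcost_def by (rule nn_integral_cong_AE)
    then show ?thesis by simp
  qed
  show ?thesis
  proof (intro conjI allI impI)
    fix V zmin zmax
    assume "continuous_on (closure \<Omega>) V \<and> visc_solution \<Omega> (Fop \<beta> U l f Sig) V \<and> contact_choice \<Omega> V zmin zmax"
    then show "Jcost \<nu>X \<nu>M \<Omega> (Fop \<beta> U l f Sig) V zmin zmax = 0"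
      by (elim conjE) (rule part1)
  next
    fix V zmin zmax
    assume "continuous_on (closure \<Omega>) V \<and> visc_solution \<Omega> (Fop \<beta> U l f Sig) V
        \<and> (\<forall>x\<in>frontier \<Omega>. V x = g x) \<and> contact_choice \<Omega> V zmin zmax"
    then show "Jcost \<nu>X \<nu>M \<Omega> (Fop \<beta> U l f Sig) V zmin zmax = 0"
      by (elim conjE) (rule part1)
  next
    fix V zmin zmax
    let ?F = "Fop \<beta> U l f Sig"
    let ?u = "\<lambda>xm. J_super \<Omega> ?F V zmin (fst xm) (snd xm) + J_sub \<Omega> ?F V zmax (fst xm) (snd xm)"
    assume A: "continuous_on (closure \<Omega>) V \<and> contact_choice \<Omega> V zmin zmax
        \<and> ?u \<in> borel_measurable (\<nu>X \<Otimes>\<^sub>M \<nu>M) \<and> Jcost \<nu>X \<nu>M \<Omega> ?F V zmin zmax = 0"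
    have meas: "(\<lambda>xm. ennreal (?u xm)) \<in> borel_measurable (\<nu>X \<Otimes>\<^sub>M \<nu>M)"
    proof (rule measurable_compose[OF _ measurable_ennreal])
      show "?u \<in> borel_measurable (\<nu>X \<Otimes>\<^sub>M \<nu>M)" using A by (elim conjE)
    qed
    have J0: "Jcost \<nu>X \<nu>M \<Omega> ?F V zmin zmax = 0" using A by (elim conjE)
    have AE0: "AE xm in \<nu>X \<Otimes>\<^sub>M \<nu>M. ennreal (?u xm) = 0"
    proof (rule iffD1[OF nn_integral_0_iff_AE[OF meas]])
      show "(\<integral>\<^sup>+ xm. ennreal (?u xm) \<partial>(\<nu>X \<Otimes>\<^sub>M \<nu>M)) = 0"
        using J0 unfolding Jcost_def .
    qed
    have key: "(zmin (fst xm) (snd xm) \<in> \<Omega> \<longrightarrow>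
               ?F (zmin (fst xm) (snd xm)) (V (zmin (fst xm) (snd xm)))
                 (snd xm *v (fst xm - zmin (fst xm) (snd xm))) (- snd xm) \<ge> 0)
          \<and> (zmax (fst xm) (snd xm) \<in> \<Omega> \<longrightarrow>
               ?F (zmax (fst xm) (snd xm)) (V (zmax (fst xm) (snd xm)))
                 (- (snd xm *v (fst xm - zmax (fst xm) (snd xm)))) (snd xm) \<le> 0)"
      if e: "ennreal (?u xm) = 0" for xm
    proof -
      define a where "a = J_super \<Omega> ?F V zmin (fst xm) (snd xm)"
      define b where "b = J_sub \<Omega> ?F V zmax (fst xm) (snd xm)"
      have nn1: "a \<ge> 0" unfolding a_def J_super_def Let_def by simp
      have nn2: "b \<ge> 0" unfolding b_def J_sub_def Let_def by simp
      have "a + b \<le> 0" using e unfolding a_def b_def by (simp only: ennreal_eq_0_iff)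
      then have a0: "a = 0" and b0: "b = 0" using nn1 nn2 by linarith+
      show ?thesis
      proof (intro conjI impI)
        assume zi: "zmin (fst xm) (snd xm) \<in> \<Omega>"
        have "max (- ?F (zmin (fst xm) (snd xm)) (V (zmin (fst xm) (snd xm)))
                 (snd xm *v (fst xm - zmin (fst xm) (snd xm))) (- snd xm)) 0 = 0"
          using a0 zi unfolding a_def J_super_def Let_def by simp
        then show "?F (zmin (fst xm) (snd xm)) (V (zmin (fst xm) (snd xm)))
                 (snd xm *v (fst xm - zmin (fst xm) (snd xm))) (- snd xm) \<ge> 0"
          by (simp add: max_def split: if_splits)
      next
        assume zi: "zmax (fst xm) (snd xm) \<in> \<Omega>"
        have "max (?F (zmax (fst xm) (snd xm)) (V (zmax (fst xm) (snd xm)))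
                 (- (snd xm *v (fst xm - zmax (fst xm) (snd xm)))) (snd xm)) 0 = 0"
          using b0 zi unfolding b_def J_sub_def Let_def by simp
        then show "?F (zmax (fst xm) (snd xm)) (V (zmax (fst xm) (snd xm)))
                 (- (snd xm *v (fst xm - zmax (fst xm) (snd xm)))) (snd xm) \<le> 0"
          by (simp add: max_def split: if_splits)
      qed
    qed
    show "AE xm in \<nu>X \<Otimes>\<^sub>M \<nu>M.
            (zmin (fst xm) (snd xm) \<in> \<Omega> \<longrightarrow>
               ?F (zmin (fst xm) (snd xm)) (V (zmin (fst xm) (snd xm)))
                 (snd xm *v (fst xm - zmin (fst xm) (snd xm))) (- snd xm) \<ge> 0)
          \<and> (zmax (fst xm) (snd xm) \<in> \<Omega> \<longrightarrow>
               ?F (zmax (fst xm) (snd xm)) (V (zmax (fst xm) (snd xm)))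
                 (- (snd xm *v (fst xm - zmax (fst xm) (snd xm)))) (snd xm) \<le> 0)"
      using AE0 by (rule eventually_mono) (rule key)
  qed
qed

end
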